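(* Let $\varepsilon\in\{1,-1\}$, let $\Sigma\subset\mathbb{M}^2(\varepsilon)\times\mathbb{R}$ be a $K$-surface with height function $h$, and let $\gamma\subset\Sigma$ be a differentiable curve such that either (1) $\gamma$ is contained in a horizontal slice $\mathbb{M}^2(\varepsilon)\times\{t_0\}$, or (2) $\gamma$ is an integral curve of $\nabla h$, the gradient of $h$ with respect to the induced metric $I$. Then $\gamma$ is a line of curvature for the pair $(A,II)$ if and only if $\gamma$ is a line of curvature of $\Sigma$ in the classical sense (for the pair $(I,II)$).
   Context: $\mathbb{M}^2(\varepsilon)$ is $\mathbb{S}^2$ for $\varepsilon=1$ and $\mathbb{H}^2$ for $\varepsilon=-1$. A $K$-surface is an immersed surface with constant Gaussian curvature $K>\max\{0,\varepsilon\}$; $I,II$ are its first and second fundamental forms, $h$ is the restriction of the projection onto $\mathbb{R}$, and $A=I+\frac{\varepsilon}{K-\varepsilon}dh^2$ (a Riemannian metric). For a pair $(A,B)$ with shape operator $S$ given by $B(X,Y)=A(SX,Y)$, lines of curvature are integral curves of the eigendirections of $S$. *)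

theory Defs
  imports "HOL-Analysis.Analysis"
begin

text \<open>Ambient space: M2(eps) x R is modelled inside R^4 = R^3 x R.  For eps = 1,
 M2(1) is the unit sphere of Euclidean R^3; for eps = -1, M2(-1) is the upper sheet of the
 hyperboloid in Minkowski space R^3_1.  The ambient (flat) bilinear form is
 eps*x1*y1 + x2*y2 + x3*y3 + x4*y4; its restriction to M2(eps) x R is the product metric.
 The fourth coordinate is the R factor.\<close>

definition amb :: "real \<Rightarrow> real^4 \<Rightarrow> real^4 \<Rightarrow> real" where
  "amb eps x y = eps * (x$1 * y$1) + x$2 * y$2 + x$3 * y$3 + x$4 * y$4"

definition in_MxR :: "real \<Rightarrow> real^4 \<Rightarrow> bool" where
  "in_MxR eps x \<longleftrightarrow> eps * (x$1)^2 + (x$2)^2 + (x$3)^2 = eps \<and> (eps = -1 \<longrightarrow> x$1 > 0)"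

text \<open>Position vector of the M2(eps) component (normal direction of M2(eps) x R in R^4).\<close>
definition Mpos :: "real^4 \<Rightarrow> real^4" where
  "Mpos x = (\<chi> i. if i = 4 then 0 else x$i)"

definition pd :: "2 \<Rightarrow> (real^2 \<Rightarrow> 'b::real_normed_vector) \<Rightarrow> real^2 \<Rightarrow> 'b" where
  "pd i f p = vector_derivative (\<lambda>s. f (p + s *\<^sub>R axis i 1)) (at 0)"

fun Ck :: "nat \<Rightarrow> (real^2) set \<Rightarrow> (real^2 \<Rightarrow> 'b::real_normed_vector) \<Rightarrow> bool" where
  "Ck 0 U f = continuous_on U f"
| "Ck (Suc k) U f = ((\<forall>p\<in>U. f differentiable (at p)) \<and> (\<forall>i. Ck k U (pd i f)))"

definition smooth_map :: "(real^2) set \<Rightarrow> (real^2 \<Rightarrow> 'b::real_normed_vector) \<Rightarrow> bool" where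
  "smooth_map U f \<longleftrightarrow> (\<forall>k. Ck k U f)"

definition Imat :: "real \<Rightarrow> (real^2 \<Rightarrow> real^4) \<Rightarrow> real^2 \<Rightarrow> real^2^2" where
  "Imat eps X p = (\<chi> i j. amb eps (pd i X p) (pd j X p))"

definition IImat :: "real \<Rightarrow> (real^2 \<Rightarrow> real^4) \<Rightarrow> (real^2 \<Rightarrow> real^4) \<Rightarrow> real^2 \<Rightarrow> real^2^2" where
  "IImat eps X N p = (\<chi> i j. amb eps (pd i (pd j X) p) (N p))"

definition height :: "(real^2 \<Rightarrow> real^4) \<Rightarrow> real^2 \<Rightarrow> real" where
  "height X p = X p $ 4"

definition dh :: "(real^2 \<Rightarrow> real^4) \<Rightarrow> real^2 \<Rightarrow> real^2" where
  "dh X p = (\<chi> i. pd i (height X) p)"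

definition grad_h :: "real \<Rightarrow> (real^2 \<Rightarrow> real^4) \<Rightarrow> real^2 \<Rightarrow> real^2" where
  "grad_h eps X p = matrix_inv (Imat eps X p) *v dh X p"

definition Amat :: "real \<Rightarrow> real \<Rightarrow> (real^2 \<Rightarrow> real^4) \<Rightarrow> real^2 \<Rightarrow> real^2^2" where
  "Amat eps K X p = (\<chi> i j. Imat eps X p $ i $ j + eps / (K - eps) * (dh X p $ i) * (dh X p $ j))"

text \<open>Gaussian (intrinsic) curvature of the induced metric I, via the Brioschi formula.\<close>
definition gauss_curv :: "real \<Rightarrow> (real^2 \<Rightarrow> real^4) \<Rightarrow> real^2 \<Rightarrow> real" where
  "gauss_curv eps X p =
    (let E = (\<lambda>q. Imat eps X q $ 1 $ 1); F = (\<lambda>q. Imat eps X q $ 1 $ 2);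
         G = (\<lambda>q. Imat eps X q $ 2 $ 2);
         e = E p; f = F p; g = G p;
         Eu = pd 1 E p; Ev = pd 2 E p; Fu = pd 1 F p; Fv = pd 2 F p;
         Gu = pd 1 G p; Gv = pd 2 G p;
         Evv = pd 2 (pd 2 E) p; Fuv = pd 2 (pd 1 F) p; Guu = pd 1 (pd 1 G) p;
         a11 = - Evv / 2 + Fuv - Guu / 2; a12 = Eu / 2; a13 = Fu - Ev / 2;
         a21 = Fv - Gu / 2; a31 = Gv / 2;
         d1 = a11 * (e * g - f * f) - a12 * (a21 * g - f * a31) + a13 * (a21 * f - e * a31);
         d2 = - (Ev / 2) * ((Ev / 2) * g - f * (Gu / 2)) + (Gu / 2) * ((Ev / 2) * f - e * (Gu / 2))
     in (d1 - d2) / (e * g - f * f)^2)"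

definition K_surface :: "real \<Rightarrow> real \<Rightarrow> (real^2) set \<Rightarrow> (real^2 \<Rightarrow> real^4) \<Rightarrow> (real^2 \<Rightarrow> real^4) \<Rightarrow> bool" where
  "K_surface eps K U X N \<longleftrightarrow>
     open U \<and> smooth_map U X \<and> (\<forall>p\<in>U. in_MxR eps (X p)) \<and>
     (\<forall>p\<in>U. \<forall>\<alpha> \<beta>. \<alpha> *\<^sub>R pd 1 X p + \<beta> *\<^sub>R pd 2 X p = 0 \<longrightarrow> \<alpha> = 0 \<and> \<beta> = 0) \<and>
     (\<forall>p\<in>U. amb eps (N p) (N p) = 1 \<and> amb eps (N p) (Mpos (X p)) = 0 \<and>
             (\<forall>i. amb eps (N p) (pd i X p) = 0)) \<and>
     (\<forall>p\<in>U. gauss_curv eps X p = K)"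

text \<open>Line of curvature for a pair (A,B): the tangent of the (regular) curve c in the
 parameter domain is at every point an eigenvector of the shape operator S = A^{-1} B,
 i.e. of S defined by B(X,Y) = A(SX,Y).\<close>
definition line_of_curvature ::
  "(real^2 \<Rightarrow> real^2^2) \<Rightarrow> (real^2 \<Rightarrow> real^2^2) \<Rightarrow> (real \<Rightarrow> real^2) \<Rightarrow> real set \<Rightarrow> bool" where
  "line_of_curvature Am Bm c J \<longleftrightarrow>
     (\<forall>t\<in>J. \<exists>mu. (matrix_inv (Am (c t)) ** Bm (c t)) *v vector_derivative c (at t)
                   = mu *\<^sub>R vector_derivative c (at t))"

end

theory Submission imports Defs begin
lemma pos4: fixes a b c d :: real shows "(a\<noteq>0 \<or> b\<noteq>0 \<or> c\<noteq>0 \<or> d\<noteq>0) \<Longrightarrow> 0 < a*a+b*b+c*c+d*d"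
  using not_real_square_gt_zero[of a] not_real_square_gt_zero[of b] not_real_square_gt_zero[of c] not_real_square_gt_zero[of d]
    zero_le_square[of a] zero_le_square[of b] zero_le_square[of c] zero_le_square[of d]
  by linarith

lemma lor: fixes x1 x2 x3 w1 w2 w3 w4 :: real
  assumes x1: "x1 > 0" and xe: "x2*x2 + x3*x3 = x1*x1 - 1" and oo: "x1 * w1 = x2 * w2 + x3 * w3"
  shows "w2*w2+w3*w3 - w1*w1 \<ge> 0" and "(w1\<noteq>0 \<or> w2\<noteq>0 \<or> w3\<noteq>0 \<or> w4\<noteq>0) \<Longrightarrow> 0 < w2*w2+w3*w3 - w1*w1 + w4*w4"
proof -
  have cs: "(x2 * w2 + x3 * w3)^2 \<le> (x2*x2 + x3*x3) * (w2*w2 + w3*w3)"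
    using zero_le_square[of "x2*w3 - x3*w2"] by (simp add: power2_eq_square algebra_simps)
  have e1: "(x1*w1)*(x1*w1) \<le> (x1*x1 - 1)*(w2*w2+w3*w3)" using cs unfolding xe oo power2_eq_square .
  have e2: "x1*x1 * (w2*w2+w3*w3 - w1*w1) - (w2*w2+w3*w3) = (x1*x1 - 1)*(w2*w2+w3*w3) - (x1*w1)*(x1*w1)"
    by (simp add: algebra_simps)
  have a: "x1*x1 * (w2*w2+w3*w3 - w1*w1) \<ge> w2*w2+w3*w3"
    using e1 e2 by linarith
  have p: "w2*w2+w3*w3 \<ge> 0" by simp
  have xx: "x1*x1 > 0" using x1 by simp
  show S: "w2*w2+w3*w3 - w1*w1 \<ge> 0"
    using a p xx by (smt (verit) mult_pos_neg)
  assume nz: "w1\<noteq>0 \<or> w2\<noteq>0 \<or> w3\<noteq>0 \<or> w4\<noteq>0"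
  show "0 < w2*w2+w3*w3 - w1*w1 + w4*w4"
  proof (rule ccontr)
    assume "\<not> ?thesis"
    then have "w2*w2+w3*w3 - w1*w1 = 0" "w4*w4 = 0" using S zero_le_square[of w4] by linarith+
    then have "w2*w2+w3*w3 \<le> 0" "w4 = 0" using a by simp_all
    then have "w2*w2 = 0" "w3*w3 = 0" using zero_le_square[of w2] zero_le_square[of w3] by linarith+
    then have "w2 = 0" "w3 = 0" by simp_all
    then have "w1 = 0" using oo x1 by simp
    then show False using nz \<open>w2=0\<close> \<open>w3=0\<close> \<open>w4=0\<close> by simp
  qed
qed
lemma minv:
  fixes M :: "real^'n^'n"
  assumes "invertible M"
  shows "M ** matrix_inv M = mat 1 \<and> matrix_inv M ** M = mat 1"
  using assms unfolding invertible_def matrix_inv_def by (rule someI_ex)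

lemma posdef_invertible:
  fixes M :: "real^'n^'n"
  assumes "\<And>\<alpha>. \<alpha> \<noteq> 0 \<Longrightarrow> \<alpha> \<bullet> (M *v \<alpha>) > 0"
  shows "invertible M"
proof -
  have "\<forall>x. M *v x = 0 \<longrightarrow> x = 0"
    using assms by (metis inner_zero_right less_irrefl)
  then show ?thesis using invertible_left_inverse matrix_left_invertible_ker(1) by blast
qed

lemma inv_solve:
  fixes M B :: "real^'n^'n"
  assumes "invertible M"
  shows "(matrix_inv M ** B) *v v = w \<longleftrightarrow> B *v v = M *v w"
proof
  assume h: "(matrix_inv M ** B) *v v = w"
  have "M *v w = (M ** matrix_inv M ** B) *v v"
    by (simp add: h[symmetric] matrix_vector_mul_assoc matrix_mul_assoc)
  also have "\<dots> = B *v v" using minv[OF assms] by simp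
  finally show "B *v v = M *v w" by simp
next
  assume h: "B *v v = M *v w"
  have "(matrix_inv M ** B) *v v = (matrix_inv M ** M) *v w"
    by (simp add: h matrix_vector_mul_assoc[symmetric])
  also have "\<dots> = w" using minv[OF assms] by simp
  finally show "(matrix_inv M ** B) *v v = w" .
qed

lemma eig_equiv:
  fixes A I B :: "real^'n^'n"
  assumes "invertible A" "invertible I" "A *v v = l *\<^sub>R (I *v v)" "l \<noteq> 0"
  shows "(\<exists>mu. (matrix_inv A ** B) *v v = mu *\<^sub>R v) \<longleftrightarrow> (\<exists>mu. (matrix_inv I ** B) *v v = mu *\<^sub>R v)"
proof -
  have "(\<exists>mu. (matrix_inv A ** B) *v v = mu *\<^sub>R v) \<longleftrightarrow> (\<exists>mu. B *v v = mu *\<^sub>R (A *v v))"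
    by (simp add: inv_solve[OF assms(1)] matrix_vector_mult_scaleR)
  also have "\<dots> \<longleftrightarrow> (\<exists>mu. B *v v = mu *\<^sub>R (I *v v))"
  proof
    assume "\<exists>mu. B *v v = mu *\<^sub>R (A *v v)"
    then obtain mu where "B *v v = mu *\<^sub>R (A *v v)" by blast
    then have "B *v v = (mu * l) *\<^sub>R (I *v v)" using assms(3) by simp
    then show "\<exists>mu. B *v v = mu *\<^sub>R (I *v v)" by blast
  next
    assume "\<exists>mu. B *v v = mu *\<^sub>R (I *v v)"
    then obtain mu where "B *v v = mu *\<^sub>R (I *v v)" by blast
    then have "B *v v = (mu / l) *\<^sub>R (A *v v)" using assms(3,4) by simp
    then show "\<exists>mu. B *v v = mu *\<^sub>R (A *v v)" by blast
  qed
  also have "\<dots> \<longleftrightarrow> (\<exists>mu. (matrix_inv I ** B) *v v = mu *\<^sub>R v)"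
    by (simp add: inv_solve[OF assms(2)] matrix_vector_mult_scaleR)
  finally show ?thesis .
qed

lemma comp_deriv:
  fixes f :: "real \<Rightarrow> real^'n"
  assumes "(f has_derivative (\<lambda>h. h *\<^sub>R d)) (at s)"
  shows "((\<lambda>s. f s $ k) has_field_derivative (d $ k)) (at s)"
proof -
  have "((\<lambda>s. f s $ k) has_derivative (\<lambda>h. (h *\<^sub>R d) $ k)) (at s)"
    using bounded_linear.has_derivative[OF bounded_linear_vec_nth assms] .
  moreover have "(\<lambda>h. (h *\<^sub>R d) $ k) = (*) (d $ k)" by (auto simp: mult.commute)
  ultimately show ?thesis by (simp add: has_field_derivative_def)
qed

lemma line_deriv:
  fixes X :: "real^2 \<Rightarrow> real^4"
  assumes "(X has_derivative D) (at p)"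
  shows "((\<lambda>s. X (p + s *\<^sub>R a)) has_derivative (\<lambda>h. h *\<^sub>R D a)) (at 0)"
proof -
  have l: "linear D" using assms has_derivative_linear by blast
  have i: "((\<lambda>s. p + s *\<^sub>R a) has_derivative (\<lambda>h. h *\<^sub>R a)) (at 0)"
    by (auto intro!: derivative_eq_intros)
  have "((\<lambda>s. X (p + s *\<^sub>R a)) has_derivative (\<lambda>h. D (h *\<^sub>R a))) (at 0)"
    using has_derivative_compose[OF i] assms by simp
  then show ?thesis using linear_scale[OF l] by simp
qed

lemma pd_D:
  fixes X :: "real^2 \<Rightarrow> real^4"
  assumes "(X has_derivative D) (at p)"
  shows "pd i X p = D (axis i 1)" and "pd i (height X) p = D (axis i 1) $ 4"
proof -
  have g: "((\<lambda>s. X (p + s *\<^sub>R axis i 1)) has_vector_derivative D (axis i 1)) (at 0)"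
    using line_deriv[OF assms] by (simp add: has_vector_derivative_def)
  then show "pd i X p = D (axis i 1)" unfolding pd_def by (rule vector_derivative_at)
  have "((\<lambda>s. X (p + s *\<^sub>R axis i 1) $ 4) has_field_derivative (D (axis i 1) $ 4)) (at 0)"
    using comp_deriv line_deriv[OF assms] by blast
  then show "pd i (height X) p = D (axis i 1) $ 4"
    unfolding pd_def height_def has_real_derivative_iff_has_vector_derivative
    by (rule vector_derivative_at)
qed

lemma tangent:
  fixes X :: "real^2 \<Rightarrow> real^4"
  assumes "(X has_derivative D) (at p)" "open U" "p \<in> U" "\<forall>q\<in>U. in_MxR eps (X q)"
  shows "amb eps (Mpos (X p)) (D a) = 0"
proof -
  have g: "((\<lambda>s. X (p + s *\<^sub>R a)) has_derivative (\<lambda>h. h *\<^sub>R D a)) (at 0)"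
    using line_deriv[OF assms(1)] .
  let ?g = "\<lambda>s. X (p + s *\<^sub>R a)"
  have d: "((\<lambda>s. eps * (?g s $ 1)^2 + (?g s $ 2)^2 + (?g s $ 3)^2) has_field_derivative
     (eps * (2 * ?g 0 $ 1 * D a $ 1) + 2 * ?g 0 $ 2 * D a $ 2 + 2 * ?g 0 $ 3 * D a $ 3)) (at 0)"
    by (auto intro!: derivative_eq_intros comp_deriv[OF g])
  obtain e where e: "e > 0" "ball p e \<subseteq> U" using assms(2,3) open_contains_ball by blast
  show ?thesis
  proof (cases "a = 0")
    case True
    then show ?thesis using has_derivative_linear[OF assms(1)] by (simp add: linear_0 amb_def)
  next
    case False
    have "\<forall>y. \<bar>0 - y\<bar> < e / norm a \<longrightarrow>
      eps * (?g 0 $ 1)^2 + (?g 0 $ 2)^2 + (?g 0 $ 3)^2 = eps * (?g y $ 1)^2 + (?g y $ 2)^2 + (?g y $ 3)^2"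
    proof (intro allI impI)
      fix y :: real assume "\<bar>0 - y\<bar> < e / norm a"
      then have "norm (y *\<^sub>R a) < e" using False by (simp add: field_simps)
      then have "p + y *\<^sub>R a \<in> U" using e by (auto simp: dist_norm)
      then show "eps * (?g 0 $ 1)^2 + (?g 0 $ 2)^2 + (?g 0 $ 3)^2 = eps * (?g y $ 1)^2 + (?g y $ 2)^2 + (?g y $ 3)^2"
        using assms(3,4) by (simp add: in_MxR_def)
    qed
    then have "eps * (2 * ?g 0 $ 1 * D a $ 1) + 2 * ?g 0 $ 2 * D a $ 2 + 2 * ?g 0 $ 3 * D a $ 3 = 0"
      using DERIV_local_const[OF d, of "e / norm a"] e False by simp
    then show ?thesis by (simp add: amb_def Mpos_def)
  qed
qed

lemma quad2: fixes M::"real^2^2"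
  assumes "M$1$1 = amb e X1 X1" "M$1$2 = amb e X1 X2" "M$2$1=amb e X2 X1" "M$2$2 = amb e X2 X2"
  shows "a \<bullet> (M *v a) = amb e (a$1 *\<^sub>R X1 + a$2 *\<^sub>R X2) (a$1 *\<^sub>R X1 + a$2 *\<^sub>R X2)"
  unfolding inner_vec_def matrix_vector_mult_def sum_2
  by (simp add: assms amb_def algebra_simps)

lemma Q_pos:
  assumes eps: "eps = 1 \<or> eps = -1" and x: "in_MxR eps x" and o: "amb eps (Mpos x) w = 0"
  shows "amb eps w w \<ge> (w$4)^2 \<and> (w \<noteq> 0 \<longrightarrow> amb eps w w > 0)"
proof -
  have nz: "w \<noteq> 0 \<Longrightarrow> w$1 \<noteq> 0 \<or> w$2 \<noteq> 0 \<or> w$3 \<noteq> 0 \<or> w$4 \<noteq> 0"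
    by (auto simp: vec_eq_iff forall_4)
  show ?thesis using eps
  proof
    assume e: "eps = 1"
    have "amb eps w w = w$1*w$1 + w$2*w$2 + w$3*w$3 + w$4*w$4" by (simp add: amb_def e)
    then show ?thesis using nz pos4[of "w$1" "w$2" "w$3" "w$4"]
      zero_le_square[of "w$1"] zero_le_square[of "w$2"] zero_le_square[of "w$3"]
      by (auto simp: power2_eq_square)
  next
    assume e: "eps = -1"
    have x1: "x$1 > 0" and xe: "x$2*x$2 + x$3*x$3 = x$1*x$1 - 1" using x e by (auto simp: in_MxR_def power2_eq_square)
    have oo: "x$1 * w$1 = x$2 * w$2 + x$3 * w$3" using o e by (simp add: amb_def Mpos_def)
    have am: "amb eps w w = w$2*w$2 + w$3*w$3 - w$1*w$1 + w$4*w$4" by (simp add: amb_def e)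
    show ?thesis using lor[OF x1 xe oo] nz am by (auto simp: power2_eq_square)
  qed
qed

lemma point:
  assumes eps: "eps = 1 \<or> eps = -1" and K: "K > max 0 eps" and surf: "K_surface eps K U X N"
    and p: "p \<in> U"
  obtains D where "(X has_derivative D) (at p)" "invertible (Imat eps X p)" "invertible (Amat eps K X p)"
    "\<forall>\<alpha>. \<alpha> \<noteq> 0 \<longrightarrow> \<alpha> \<bullet> (Amat eps K X p *v \<alpha>) > 0"
    "\<forall>\<alpha>. Amat eps K X p *v \<alpha> = Imat eps X p *v \<alpha> + (eps/(K-eps) * (dh X p \<bullet> \<alpha>)) *\<^sub>R dh X p"
    "\<forall>\<alpha>. dh X p \<bullet> \<alpha> = D \<alpha> $ 4"
proof -
  have sm: "smooth_map U X" and op: "open U" and M: "\<forall>q\<in>U. in_MxR eps (X q)"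
    using surf unfolding K_surface_def by blast+
  have imm: "\<forall>\<alpha> \<beta>. \<alpha> *\<^sub>R pd 1 X p + \<beta> *\<^sub>R pd 2 X p = 0 \<longrightarrow> \<alpha> = 0 \<and> \<beta> = 0"
    using surf p unfolding K_surface_def by blast
  have "Ck (Suc 0) U X" using sm unfolding smooth_map_def by blast
  then have "X differentiable (at p)" using p by simp
  then obtain D where D: "(X has_derivative D) (at p)" unfolding differentiable_def by blast
  have lin: "linear D" using D has_derivative_linear by blast
  define X1 where "X1 = D (axis 1 1)"
  define X2 where "X2 = D (axis 2 1)"
  have pd1: "pd 1 X p = X1" "pd 2 X p = X2" using pd_D(1)[OF D] by (simp_all add: X1_def X2_def)
  have dh: "dh X p $ 1 = X1 $ 4" "dh X p $ 2 = X2 $ 4"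
    using pd_D(2)[OF D] by (simp_all add: dh_def X1_def X2_def)
  have Im: "Imat eps X p $ i $ j = amb eps (pd i X p) (pd j X p)" for i j by (simp add: Imat_def)
  have Dexp: "D \<alpha> = \<alpha>$1 *\<^sub>R X1 + \<alpha>$2 *\<^sub>R X2" for \<alpha>
  proof -
    have "\<alpha> = \<alpha>$1 *\<^sub>R axis 1 1 + \<alpha>$2 *\<^sub>R axis 2 1"
      by (auto simp: vec_eq_iff forall_2 axis_def)
    then have "D \<alpha> = D (\<alpha>$1 *\<^sub>R axis 1 1 + \<alpha>$2 *\<^sub>R axis 2 1)" by simp
    also have "\<dots> = \<alpha>$1 *\<^sub>R X1 + \<alpha>$2 *\<^sub>R X2"
      by (simp add: linear_add[OF lin] linear_scale[OF lin] X1_def X2_def)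
    finally show ?thesis .
  qed
  have quadI: "\<alpha> \<bullet> (Imat eps X p *v \<alpha>) = amb eps (D \<alpha>) (D \<alpha>)" for \<alpha>
    unfolding Dexp by (rule quad2) (simp_all add: Imat_def pd1)
  have dhD: "dh X p \<bullet> \<alpha> = D \<alpha> $ 4" for \<alpha>
    unfolding Dexp inner_vec_def sum_2 dh by (simp add: algebra_simps)
  have Aexp: "Amat eps K X p *v \<alpha> = Imat eps X p *v \<alpha> + (eps/(K-eps) * (dh X p \<bullet> \<alpha>)) *\<^sub>R dh X p" for \<alpha>
    unfolding Amat_def by (simp add: vec_eq_iff matrix_vector_mult_def inner_vec_def sum_2 algebra_simps)
  have Dnz: "\<alpha> \<noteq> 0 \<Longrightarrow> D \<alpha> \<noteq> 0" for \<alpha>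
  proof -
    assume nz: "\<alpha> \<noteq> 0"
    have "\<alpha>$1 \<noteq> 0 \<or> \<alpha>$2 \<noteq> 0" using nz by (auto simp: vec_eq_iff forall_2)
    then show "D \<alpha> \<noteq> 0" using imm[rule_format, of "\<alpha>$1" "\<alpha>$2"] unfolding pd1 Dexp by blast
  qed
  have Q: "amb eps (D \<alpha>) (D \<alpha>) \<ge> (D \<alpha> $ 4)^2 \<and> (D \<alpha> \<noteq> 0 \<longrightarrow> amb eps (D \<alpha>) (D \<alpha>) > 0)" for \<alpha>
    using Q_pos[OF eps M[rule_format, OF p] tangent[OF D op p M]] .
  have posI: "\<alpha> \<noteq> 0 \<Longrightarrow> \<alpha> \<bullet> (Imat eps X p *v \<alpha>) > 0" for \<alpha>
    using Q[of \<alpha>] Dnz[of \<alpha>] quadI[of \<alpha>] by simp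
  have posA: "\<alpha> \<noteq> 0 \<Longrightarrow> \<alpha> \<bullet> (Amat eps K X p *v \<alpha>) > 0" for \<alpha>
  proof -
    assume nz: "\<alpha> \<noteq> 0"
    let ?q = "amb eps (D \<alpha>) (D \<alpha>)" and ?d = "D \<alpha> $ 4"
    have q: "?q \<ge> ?d^2" "?q > 0" using Q[of \<alpha>] Dnz[OF nz] by auto
    have eq: "\<alpha> \<bullet> (Amat eps K X p *v \<alpha>) = ?q + eps/(K-eps) * ?d^2"
      unfolding Aexp inner_add_right inner_scaleR_right quadI dhD
      using dhD[of \<alpha>] by (simp add: power2_eq_square inner_commute)
    show ?thesis using eps
    proof
      assume e: "eps = 1"
      then have "K - eps > 0" using K by simp
      then have "eps/(K-eps) * ?d^2 \<ge> 0" using e by simp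
      then show ?thesis using eq q by linarith
    next
      assume e: "eps = -1"
      then have Kp: "K + 1 > 1" using K by simp
      have "eps/(K-eps) * ?d^2 = - (?d^2 / (K+1))" using e by simp
      moreover have "?d^2 / (K+1) \<le> ?d^2" using Kp
        by (simp add: divide_le_eq_1 mult_le_cancel_left1 divide_le_eq)
      moreover have "?d^2 / (K+1) < ?q"
      proof -
        have "?d^2 / (K+1) \<le> ?q / (K+1)" using q(1) Kp by (simp add: divide_right_mono)
        also have "\<dots> < ?q" using q(2) Kp by (simp add: divide_less_eq)
        finally show ?thesis .
      qed
      ultimately show ?thesis using eq by linarith
    qed
  qed
  have iI: "invertible (Imat eps X p)" by (rule posdef_invertible) (rule posI)
  have iA: "invertible (Amat eps K X p)" by (rule posdef_invertible) (rule posA)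
  show ?thesis
    by (rule that[OF D iI iA]) (use posA Aexp dhD in blast)+
qed


theorem lemma3:
  fixes eps K a b :: real and U :: "(real^2) set" and X N :: "real^2 \<Rightarrow> real^4"
    and c :: "real \<Rightarrow> real^2"
  assumes eps: "eps = 1 \<or> eps = -1"
    and K: "K > max 0 eps"
    and surf: "K_surface eps K U X N"
    and ab: "a < b"
    and inU: "\<forall>t\<in>{a<..<b}. c t \<in> U"
    and diff: "\<forall>t\<in>{a<..<b}. c differentiable (at t)"
    and reg: "\<forall>t\<in>{a<..<b}. vector_derivative c (at t) \<noteq> 0"
    and cases: "(\<exists>t0. \<forall>t\<in>{a<..<b}. height X (c t) = t0)
             \<or> (\<forall>t\<in>{a<..<b}. (c has_vector_derivative grad_h eps X (c t)) (at t))"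
  shows "line_of_curvature (Amat eps K X) (IImat eps X N) c {a<..<b}
     \<longleftrightarrow> line_of_curvature (Imat eps X) (IImat eps X N) c {a<..<b}"
proof -
  have pt: "(\<exists>mu. (matrix_inv (Amat eps K X (c t)) ** IImat eps X N (c t)) *v vector_derivative c (at t)
                   = mu *\<^sub>R vector_derivative c (at t)) \<longleftrightarrow>
            (\<exists>mu. (matrix_inv (Imat eps X (c t)) ** IImat eps X N (c t)) *v vector_derivative c (at t)
                   = mu *\<^sub>R vector_derivative c (at t))" if t: "t \<in> {a<..<b}" for t
  proof -
    define v where "v = vector_derivative c (at t)"
    define p where "p = c t"
    have p: "p \<in> U" using inU t by (simp add: p_def)
    have vnz: "v \<noteq> 0" using reg t by (simp add: v_def)
    obtain D where D: "(X has_derivative D) (at p)" and iI: "invertible (Imat eps X p)"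
      and iA: "invertible (Amat eps K X p)"
      and posA: "\<forall>\<alpha>. \<alpha> \<noteq> 0 \<longrightarrow> \<alpha> \<bullet> (Amat eps K X p *v \<alpha>) > 0"
      and Aexp: "\<forall>\<alpha>. Amat eps K X p *v \<alpha> = Imat eps X p *v \<alpha> + (eps/(K-eps) * (dh X p \<bullet> \<alpha>)) *\<^sub>R dh X p"
      and dhD: "\<forall>\<alpha>. dh X p \<bullet> \<alpha> = D \<alpha> $ 4"
      using point[OF eps K surf p] by blast
    have cv: "(c has_vector_derivative v) (at t)"
      using diff t vector_derivative_works[of c "at t"] unfolding v_def by simp
    have "\<exists>l. l \<noteq> 0 \<and> Amat eps K X p *v v = l *\<^sub>R (Imat eps X p *v v)"
      using cases
    proof
      assume "\<exists>t0. \<forall>t\<in>{a<..<b}. height X (c t) = t0"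
      then obtain t0 where h: "\<forall>t\<in>{a<..<b}. height X (c t) = t0" by blast
      have lin: "linear D" using D has_derivative_linear by blast
      have "((\<lambda>s. X (c s)) has_derivative (\<lambda>h. D (h *\<^sub>R v))) (at t)"
        using has_derivative_compose[OF cv[unfolded has_vector_derivative_def]] D by (simp add: p_def)
      then have "((\<lambda>s. X (c s)) has_derivative (\<lambda>h. h *\<^sub>R D v)) (at t)"
        by (simp add: linear_scale[OF lin])
      then have d: "((\<lambda>s. X (c s) $ 4) has_field_derivative (D v $ 4)) (at t)"
        by (rule comp_deriv)
      have "D v $ 4 = 0"
      proof (rule DERIV_local_const[OF d, of "min (t-a) (b-t)"])
        show "0 < min (t-a) (b-t)" using t by simp
        show "\<forall>y. \<bar>t - y\<bar> < min (t - a) (b - t) \<longrightarrow> X (c t) $ 4 = X (c y) $ 4"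
          using h t by (auto simp: height_def abs_less_iff)
      qed
      then have "dh X p \<bullet> v = 0" using dhD by simp
      then have "Amat eps K X p *v v = 1 *\<^sub>R (Imat eps X p *v v)" using Aexp by simp
      then show ?thesis by (intro exI[of _ 1]) simp
    next
      assume "\<forall>t\<in>{a<..<b}. (c has_vector_derivative grad_h eps X (c t)) (at t)"
      then have "(c has_vector_derivative grad_h eps X p) (at t)" using t by (simp add: p_def)
      then have "v = grad_h eps X p" unfolding v_def by (rule vector_derivative_at)
      then have Iv: "Imat eps X p *v v = dh X p"
        using minv[OF iI] by (simp add: grad_h_def matrix_vector_mul_assoc)
      define l where "l = 1 + eps/(K-eps) * (dh X p \<bullet> v)"
      have Av: "Amat eps K X p *v v = l *\<^sub>R (Imat eps X p *v v)"
        using Aexp Iv by (simp add: l_def algebra_simps)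
      have "l \<noteq> 0"
      proof
        assume "l = 0"
        then have "v \<bullet> (Amat eps K X p *v v) = 0" using Av by simp
        then show False using posA vnz by force
      qed
      then show ?thesis using Av by blast
    qed
    then obtain l where "l \<noteq> 0" "Amat eps K X p *v v = l *\<^sub>R (Imat eps X p *v v)" by blast
    from eig_equiv[OF iA iI this(2) this(1)] show ?thesis by (simp add: v_def p_def)
  qed
  show ?thesis unfolding line_of_curvature_def using pt by blast
qed

end
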